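(* Let $L$ be a Lie algebra over a field $F$ and $\tilde L=L\otimes_FE$. Let $\Omega$ be a finite family of pairwise commuting elements of $\tilde L$ such that every element of $\Omega$ lies in one of the subspaces $L\otimes e_\pi+\tilde Le_\pi$. Write $\operatorname{ad}^{[k]}(\Omega)=U_k(\operatorname{ad}(\Omega))$ and suppose $\operatorname{ad}^{[3]}(\Omega)=\operatorname{ad}^{[4]}(\Omega)=0$. Then for arbitrary $y_1,y_2\in\tilde L$, \[\operatorname{ad}(y_1\operatorname{ad}^{[2]}(\Omega))\operatorname{ad}(y_2\operatorname{ad}^{[2]}(\Omega))=\operatorname{ad}^{[2]}(\Omega)\operatorname{ad}(y_1)\operatorname{ad}(y_2)\operatorname{ad}^{[2]}(\Omega).\]
   Context: $E$ is the commutative associative $F$-algebra without unit generated by $e_1,e_2,\dots$ with relations $e_i^2=0$; its basis consists of $e_\pi=e_{i_1}\cdots e_{i_r}$ for nonempty finite $\pi=\{i_1<\dots<i_r\}$. $\tilde L=L\otimes_FE$ with $[x\otimes\alpha,y\otimes\beta]=[x,y]\otimes\alpha\beta$, and $\tilde Le_\pi$ denotes $L\otimes Ee_\pi$. $\operatorname{ad}(b):x\mapsto[x,b]$, operators act on the right ($x\,uv$ means apply $u$ then $v$). For a finite family $\Omega'$ of pairwise commuting operators, $U_k(\Omega')=\sum d_1\cdots d_k$ over all $k$-element subsets $\{d_1,\dots,d_k\}$ of $\Omega'$, and $\operatorname{ad}(\Omega)=\{\operatorname{ad}(b)\}_{b\in\Omega}$. *)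

theory Defs
  imports Complex_Main
begin

definition lie_algebra :: "('f::field \<Rightarrow> 'l::ab_group_add \<Rightarrow> 'l) \<Rightarrow> ('l \<Rightarrow> 'l \<Rightarrow> 'l) \<Rightarrow> bool" where
  "lie_algebra scale br \<longleftrightarrow> vector_space scale \<and>
     (\<forall>x y z. br (x + y) z = br x z + br y z) \<and>
     (\<forall>x y z. br x (y + z) = br x y + br x z) \<and>
     (\<forall>c x y. br (scale c x) y = scale c (br x y)) \<and>
     (\<forall>c x y. br x (scale c y) = scale c (br x y)) \<and>
     (\<forall>x. br x x = 0) \<and>
     (\<forall>x y z. br x (br y z) + br y (br z x) + br z (br x y) = 0)"

text \<open>Elements of L \<otimes> E, identified with their coordinate functions w.r.t. the basis
e_\<pi> (\<pi> nonempty finite subset of nat): \<open>y \<pi>\<close> is the L-coefficient of e_\<pi>.\<close>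
definition tilde :: "(nat set \<Rightarrow> 'l::zero) \<Rightarrow> bool" where
  "tilde y \<longleftrightarrow> finite {\<sigma>. y \<sigma> \<noteq> 0} \<and> (\<forall>\<sigma>. y \<sigma> \<noteq> 0 \<longrightarrow> finite \<sigma> \<and> \<sigma> \<noteq> {})"

text \<open>Bracket on L \<otimes> E: [x \<otimes> e_\<alpha>, y \<otimes> e_\<beta>] = [x,y] \<otimes> e_\<alpha> e_\<beta>, where
e_\<alpha> e_\<beta> = e_{\<alpha> \<union> \<beta>} if \<alpha>, \<beta> are disjoint and 0 otherwise.\<close>
definition tbr :: "('l \<Rightarrow> 'l \<Rightarrow> 'l::comm_monoid_add) \<Rightarrow> (nat set \<Rightarrow> 'l) \<Rightarrow> (nat set \<Rightarrow> 'l) \<Rightarrow> (nat set \<Rightarrow> 'l)" where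
  "tbr br y z = (\<lambda>\<sigma>. if finite \<sigma> then (\<Sum>\<alpha>\<in>Pow \<sigma>. if \<alpha> \<noteq> {} \<and> \<alpha> \<noteq> \<sigma> then br (y \<alpha>) (z (\<sigma> - \<alpha>)) else 0) else 0)"

definition mul_e :: "(nat set \<Rightarrow> 'l::zero) \<Rightarrow> nat set \<Rightarrow> (nat set \<Rightarrow> 'l)" where
  "mul_e y \<pi> = (\<lambda>\<sigma>. if \<pi> \<subseteq> \<sigma> \<and> \<sigma> \<noteq> \<pi> then y (\<sigma> - \<pi>) else 0)"

definition in_sub :: "nat set \<Rightarrow> (nat set \<Rightarrow> 'l::comm_monoid_add) \<Rightarrow> bool" where
  "in_sub \<pi> w \<longleftrightarrow> (\<exists>x y. tilde y \<and> w = (\<lambda>\<sigma>. (if \<sigma> = \<pi> then x else 0) + mul_e y \<pi> \<sigma>))"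

definition ad :: "('l \<Rightarrow> 'l \<Rightarrow> 'l::comm_monoid_add) \<Rightarrow> (nat set \<Rightarrow> 'l) \<Rightarrow> (nat set \<Rightarrow> 'l) \<Rightarrow> (nat set \<Rightarrow> 'l)" where
  "ad br b = (\<lambda>x. tbr br x b)"

text \<open>Product of operators acting on the right: opprod [d1,...,dk] x = x d1 ... dk.\<close>
definition opprod :: "('a \<Rightarrow> 'a) list \<Rightarrow> 'a \<Rightarrow> 'a" where
  "opprod ds x = fold (\<lambda>d v. d v) ds x"

definition Uk :: "(nat \<Rightarrow> (nat set \<Rightarrow> 'l) \<Rightarrow> (nat set \<Rightarrow> 'l)) \<Rightarrow> nat \<Rightarrow> nat \<Rightarrow> (nat set \<Rightarrow> 'l::comm_monoid_add) \<Rightarrow> (nat set \<Rightarrow> 'l)" where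
  "Uk ops n k = (\<lambda>x \<sigma>. \<Sum>S\<in>{S. S \<subseteq> {..<n} \<and> card S = k}. opprod (map ops (sorted_list_of_set S)) x \<sigma>)"

definition adU :: "('l \<Rightarrow> 'l \<Rightarrow> 'l::comm_monoid_add) \<Rightarrow> (nat \<Rightarrow> nat set \<Rightarrow> 'l) \<Rightarrow> nat \<Rightarrow> nat \<Rightarrow> (nat set \<Rightarrow> 'l) \<Rightarrow> (nat set \<Rightarrow> 'l)" where
  "adU br \<omega> n k = Uk (\<lambda>i. ad br (\<omega> i)) n k"

end

theory Submission
  imports Defs "HOL-Library.Function_Algebras" "HOL-Library.Multiset"
begin

locale LA =
  fixes br :: "'l::ab_group_add \<Rightarrow> 'l \<Rightarrow> 'l"
  assumes addL: "br (x + y) z = br x z + br y z"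
    and addR: "br x (y + z) = br x y + br x z"
    and alt: "br x x = 0"
    and jac: "br x (br y z) + br y (br z x) + br z (br x y) = 0"
begin

lemma br0L[simp]: "br 0 z = 0"
  using addL[of 0 0 z] by simp
lemma br0R[simp]: "br z 0 = 0"
  using addR[of z 0 0] by simp
lemma brminusL: "br (- x) z = - br x z"
  using addL[of x "-x" z] by (simp add: minus_unique[symmetric])
lemma brminusR: "br z (- x) = - br z x"
  using addR[of z x "-x"] by (simp add: minus_unique[symmetric])
lemma brdiffL: "br (x - y) z = br x z - br y z"
  using addL[of x "-y" z] brminusL by simp
lemma brdiffR: "br z (x - y) = br z x - br z y"
  using addR[of z x "-y"] brminusR by simp
lemma br_sumR: "br a (sum f A) = (\<Sum>i\<in>A. br a (f i))"
  by (induction A rule: infinite_finite_induct) (simp_all add: addR)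
lemma br_sumL: "br (sum f A) a = (\<Sum>i\<in>A. br (f i) a)"
  by (induction A rule: infinite_finite_induct) (simp_all add: addL)
lemma antisym: "br x y = - br y x"
proof -
  have "br (x+y) (x+y) = (br x x + br x y) + (br y x + br y y)" by (simp add: addL addR add_ac)
  then have "br x y + br y x = 0" by (simp add: alt)
  then show ?thesis by (simp add: eq_neg_iff_add_eq_0)
qed
lemma jac2: "br a (br b c) = br (br a b) c - br (br a c) b"
proof -
  have "br a (br b c) + br b (br c a) + br c (br a b) = 0" by (rule jac)
  moreover have "br b (br c a) = br (br a c) b"
    using antisym[of b "br c a"] antisym[of c a] brminusL by simp
  moreover have "br c (br a b) = - br (br a b) c" by (rule antisym)
  ultimately show ?thesis by (simp add: algebra_simps eq_neg_iff_add_eq_0)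
qed

end

lemma lie_LA: "lie_algebra scale br \<Longrightarrow> LA br"
  unfolding lie_algebra_def LA_def by blast

definition Pw :: "nat set \<Rightarrow> nat set set" where
  "Pw \<sigma> = {\<alpha>. \<alpha> \<subseteq> \<sigma> \<and> \<alpha> \<noteq> {} \<and> \<alpha> \<noteq> \<sigma>}"

lemma Pw_finite[simp]: "finite \<sigma> \<Longrightarrow> finite (Pw \<sigma>)"
  unfolding Pw_def by (rule finite_subset[of _ "Pow \<sigma>"]) auto

lemma tbr_eq: "finite \<sigma> \<Longrightarrow> tbr br y z \<sigma> = (\<Sum>\<alpha>\<in>Pw \<sigma>. br (y \<alpha>) (z (\<sigma> - \<alpha>)))"
proof -
  assume f: "finite \<sigma>"
  have e: "Pw \<sigma> = {\<alpha>\<in>Pow \<sigma>. \<alpha> \<noteq> {} \<and> \<alpha> \<noteq> \<sigma>}" unfolding Pw_def by auto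
  show ?thesis unfolding tbr_def using f by (simp add: sum.inter_filter[symmetric] Pw_def Pow_iff conj_assoc)
qed

lemma tbr_inf: "\<not> finite \<sigma> \<Longrightarrow> tbr br y z \<sigma> = 0"
  unfolding tbr_def by simp

context LA begin

lemma tbr_addL: "tbr br (y + y') z = tbr br y z + tbr br y' z"
  by (rule ext, case_tac "finite x") (simp_all add: tbr_eq tbr_inf addL sum.distrib)
lemma tbr_addR: "tbr br z (y + y') = tbr br z y + tbr br z y'"
  by (rule ext, case_tac "finite x") (simp_all add: tbr_eq tbr_inf addR sum.distrib)
lemma tbr_0L[simp]: "tbr br 0 z = 0"
  by (rule ext, case_tac "finite x") (simp_all add: tbr_eq tbr_inf )
lemma tbr_0R[simp]: "tbr br z 0 = 0"
  by (rule ext, case_tac "finite x") (simp_all add: tbr_eq tbr_inf )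
lemma tbr_0L'[simp]: "tbr br (\<lambda>_. 0) z = 0"
  using tbr_0L by (simp add: zero_fun_def)
lemma tbr_0R'[simp]: "tbr br z (\<lambda>_. 0) = 0"
  using tbr_0R by (simp add: zero_fun_def)
lemma tbr_minusL: "tbr br (- y) z = - tbr br y z"
  using tbr_addL[of y "-y" z] by (simp add: minus_unique[symmetric])
lemma tbr_minusR: "tbr br z (- y) = - tbr br z y"
  using tbr_addR[of z y "-y"] by (simp add: minus_unique[symmetric])
lemma tbr_diffL: "tbr br (y - y') z = tbr br y z - tbr br y' z"
  using tbr_addL[of y "-y'" z] tbr_minusL by simp
lemma tbr_diffR: "tbr br z (y - y') = tbr br z y - tbr br z y'"
  using tbr_addR[of z y "-y'"] tbr_minusR by simp
lemma tbr_sumL: "tbr br (sum f A) z = (\<Sum>i\<in>A. tbr br (f i) z)"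
proof (induction A rule: infinite_finite_induct)
  case (insert x F)
  have "tbr br (sum f (insert x F)) z = tbr br (f x + sum f F) z" by (subst sum.insert[OF insert.hyps], rule refl)
  also have "\<dots> = tbr br (f x) z + tbr br (sum f F) z" by (rule tbr_addL)
  also have "\<dots> = tbr br (f x) z + (\<Sum>i\<in>F. tbr br (f i) z)" by (simp only: insert.IH)
  also have "\<dots> = (\<Sum>i\<in>insert x F. tbr br (f i) z)" by (rule sum.insert[OF insert.hyps, symmetric])
  finally show ?case .
qed simp_all
lemma tbr_sumR: "tbr br z (sum f A) = (\<Sum>i\<in>A. tbr br z (f i))"
proof (induction A rule: infinite_finite_induct)
  case (insert x F)
  have "tbr br z (sum f (insert x F)) = tbr br z (f x + sum f F)" by (subst sum.insert[OF insert.hyps], rule refl)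
  also have "\<dots> = tbr br z (f x) + tbr br z (sum f F)" by (rule tbr_addR)
  also have "\<dots> = tbr br z (f x) + (\<Sum>i\<in>F. tbr br z (f i))" by (simp only: insert.IH)
  also have "\<dots> = (\<Sum>i\<in>insert x F. tbr br z (f i))" by (rule sum.insert[OF insert.hyps, symmetric])
  finally show ?case .
qed simp_all

end

definition P3 :: "nat set \<Rightarrow> (nat set \<times> nat set \<times> nat set) set" where
  "P3 \<sigma> = {(\<alpha>,\<beta>,\<gamma>). \<alpha> \<noteq> {} \<and> \<beta> \<noteq> {} \<and> \<gamma> \<noteq> {} \<and> \<alpha> \<inter> \<beta> = {} \<and> \<alpha> \<inter> \<gamma> = {} \<and> \<beta> \<inter> \<gamma> = {} \<and> \<alpha> \<union> \<beta> \<union> \<gamma> = \<sigma>}"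

lemma P3_swap: "(\<alpha>,\<beta>,\<gamma>) \<in> P3 \<sigma> \<Longrightarrow> (\<alpha>,\<gamma>,\<beta>) \<in> P3 \<sigma>"
  unfolding P3_def by (simp add: Int_commute Un_ac)

context LA begin

lemma J1: assumes f: "finite \<sigma>"
  shows "tbr br x (tbr br u w) \<sigma> = (\<Sum>(\<alpha>,\<beta>,\<gamma>)\<in>P3 \<sigma>. br (x \<alpha>) (br (u \<beta>) (w \<gamma>)))"
proof -
  have "tbr br x (tbr br u w) \<sigma> = (\<Sum>\<alpha>\<in>Pw \<sigma>. \<Sum>\<beta>\<in>Pw (\<sigma> - \<alpha>). br (x \<alpha>) (br (u \<beta>) (w (\<sigma> - \<alpha> - \<beta>))))"
    using f by (simp add: tbr_eq br_sumR)
  also have "\<dots> = (\<Sum>(\<alpha>,\<beta>)\<in>Sigma (Pw \<sigma>) (\<lambda>\<alpha>. Pw (\<sigma> - \<alpha>)). br (x \<alpha>) (br (u \<beta>) (w (\<sigma> - \<alpha> - \<beta>))))"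
    using f by (subst sum.Sigma) auto
  also have "\<dots> = (\<Sum>(\<alpha>,\<beta>,\<gamma>)\<in>P3 \<sigma>. br (x \<alpha>) (br (u \<beta>) (w \<gamma>)))"
    by (rule sum.reindex_bij_witness[where i="\<lambda>(\<alpha>,\<beta>,\<gamma>). (\<alpha>,\<beta>)" and j="\<lambda>(\<alpha>,\<beta>). (\<alpha>,\<beta>,\<sigma> - \<alpha> - \<beta>)"])
       (auto simp: P3_def Pw_def)
  finally show ?thesis .
qed

lemma J2: assumes f: "finite \<sigma>"
  shows "tbr br (tbr br x u) w \<sigma> = (\<Sum>(\<alpha>,\<beta>,\<gamma>)\<in>P3 \<sigma>. br (br (x \<alpha>) (u \<beta>)) (w \<gamma>))"
proof -
  have "tbr br (tbr br x u) w \<sigma> = (\<Sum>\<delta>\<in>Pw \<sigma>. \<Sum>\<alpha>\<in>Pw \<delta>. br (br (x \<alpha>) (u (\<delta> - \<alpha>))) (w (\<sigma> - \<delta>)))"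
    using f by (auto simp: tbr_eq br_sumL Pw_def intro!: sum.cong dest: finite_subset)
  also have "\<dots> = (\<Sum>(\<delta>,\<alpha>)\<in>Sigma (Pw \<sigma>) Pw. br (br (x \<alpha>) (u (\<delta> - \<alpha>))) (w (\<sigma> - \<delta>)))"
    using f by (subst sum.Sigma) (auto simp: Pw_def dest: finite_subset)
  also have "\<dots> = (\<Sum>(\<alpha>,\<beta>,\<gamma>)\<in>P3 \<sigma>. br (br (x \<alpha>) (u \<beta>)) (w \<gamma>))"
    apply (rule sum.reindex_bij_witness[where i="\<lambda>(\<alpha>,\<beta>,\<gamma>). (\<alpha> \<union> \<beta>,\<alpha>)" and j="\<lambda>(\<delta>,\<alpha>). (\<alpha>,\<delta> - \<alpha>,\<sigma> - \<delta>)"])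
    apply (auto simp: P3_def Pw_def)
     apply blast
    apply blast
    done
  finally show ?thesis .
qed

lemma J3: assumes f: "finite \<sigma>"
  shows "tbr br (tbr br x w) u \<sigma> = (\<Sum>(\<alpha>,\<beta>,\<gamma>)\<in>P3 \<sigma>. br (br (x \<alpha>) (w \<gamma>)) (u \<beta>))"
proof -
  have "tbr br (tbr br x w) u \<sigma> = (\<Sum>(\<alpha>,\<beta>,\<gamma>)\<in>P3 \<sigma>. br (br (x \<alpha>) (w \<beta>)) (u \<gamma>))"
    by (rule J2[OF f])
  also have "\<dots> = (\<Sum>(\<alpha>,\<beta>,\<gamma>)\<in>P3 \<sigma>. br (br (x \<alpha>) (w \<gamma>)) (u \<beta>))"
    by (rule sum.reindex_bij_witness[where i="\<lambda>(\<alpha>,\<beta>,\<gamma>). (\<alpha>,\<gamma>,\<beta>)" and j="\<lambda>(\<alpha>,\<beta>,\<gamma>). (\<alpha>,\<gamma>,\<beta>)"])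
       (auto intro: P3_swap)
  finally show ?thesis .
qed

lemma tbr_jac: "tbr br x (tbr br u w) = tbr br (tbr br x u) w - tbr br (tbr br x w) u"
proof (rule ext)
  fix \<sigma>
  show "tbr br x (tbr br u w) \<sigma> = (tbr br (tbr br x u) w - tbr br (tbr br x w) u) \<sigma>"
  proof (cases "finite \<sigma>")
    case True
    have e1: "tbr br x (tbr br u w) \<sigma> = (\<Sum>(\<alpha>,\<beta>,\<gamma>)\<in>P3 \<sigma>. br (x \<alpha>) (br (u \<beta>) (w \<gamma>)))"
      by (rule J1[OF True])
    have e2: "tbr br (tbr br x u) w \<sigma> = (\<Sum>(\<alpha>,\<beta>,\<gamma>)\<in>P3 \<sigma>. br (br (x \<alpha>) (u \<beta>)) (w \<gamma>))"
      by (rule J2[OF True])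
    have e3: "tbr br (tbr br x w) u \<sigma> = (\<Sum>(\<alpha>,\<beta>,\<gamma>)\<in>P3 \<sigma>. br (br (x \<alpha>) (w \<gamma>)) (u \<beta>))"
      by (rule J3[OF True])
    show ?thesis unfolding minus_apply e1 e2 e3
      by (simp add: sum_subtractf[symmetric] split_def jac2)
  qed (simp add: tbr_inf)
qed

end

definition Div :: "nat set \<Rightarrow> (nat set \<Rightarrow> 'l::zero) \<Rightarrow> bool" where
  "Div \<pi> v \<longleftrightarrow> (\<forall>\<sigma>. v \<sigma> \<noteq> 0 \<longrightarrow> \<pi> \<subseteq> \<sigma>)"

lemma tilde_0[simp]: "tilde (0::nat set \<Rightarrow> 'l::zero)"
  unfolding tilde_def by simp

lemma tilde_add: "tilde x \<Longrightarrow> tilde y \<Longrightarrow> tilde (x + (y::nat set \<Rightarrow> 'l::monoid_add))"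
proof -
  assume a: "tilde x" "tilde y"
  have nz: "\<And>\<sigma>. (x+y) \<sigma> \<noteq> 0 \<Longrightarrow> x \<sigma> \<noteq> 0 \<or> y \<sigma> \<noteq> 0" by auto
  have "{\<sigma>. (x+y) \<sigma> \<noteq> 0} \<subseteq> {\<sigma>. x \<sigma> \<noteq> 0} \<union> {\<sigma>. y \<sigma> \<noteq> 0}" using nz by blast
  moreover have "finite ({\<sigma>. x \<sigma> \<noteq> 0} \<union> {\<sigma>. y \<sigma> \<noteq> 0})" using a unfolding tilde_def by simp
  ultimately have "finite {\<sigma>. (x+y) \<sigma> \<noteq> 0}" by (rule finite_subset)
  then show ?thesis using a nz unfolding tilde_def by blast
qed

lemma tilde_minus: "tilde x \<Longrightarrow> tilde (- (x::nat set \<Rightarrow> 'l::group_add))"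
  unfolding tilde_def by auto

lemma tilde_diff: "tilde x \<Longrightarrow> tilde y \<Longrightarrow> tilde (x - (y::nat set \<Rightarrow> 'l::group_add))"
  using tilde_add[of x "- y"] tilde_minus[of y] by simp

lemma tilde_sum: "(\<And>i. i \<in> A \<Longrightarrow> tilde (f i)) \<Longrightarrow> tilde (sum f A :: nat set \<Rightarrow> 'l::comm_monoid_add)"
  by (induction A rule: infinite_finite_induct) (auto intro: tilde_add)

lemma Div_0[simp]: "Div \<pi> 0"
  unfolding Div_def by simp
lemma Div_add: "Div \<pi> x \<Longrightarrow> Div \<pi> y \<Longrightarrow> Div \<pi> (x + (y::nat set \<Rightarrow> 'l::monoid_add))"
  unfolding Div_def by (metis add.right_neutral plus_fun_apply)
lemma Div_minus: "Div \<pi> x \<Longrightarrow> Div \<pi> (- (x::nat set \<Rightarrow> 'l::group_add))"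
  unfolding Div_def by auto
lemma Div_diff: "Div \<pi> x \<Longrightarrow> Div \<pi> y \<Longrightarrow> Div \<pi> (x - (y::nat set \<Rightarrow> 'l::group_add))"
  using Div_add[of \<pi> x "- y"] Div_minus[of \<pi> y] by simp
lemma Div_sum: "(\<And>i. i \<in> A \<Longrightarrow> Div \<pi> (f i)) \<Longrightarrow> Div \<pi> (sum f A :: nat set \<Rightarrow> 'l::comm_monoid_add)"
  by (induction A rule: infinite_finite_induct) (auto intro: Div_add)

lemma in_sub_Div: "in_sub \<pi> w \<Longrightarrow> Div \<pi> w"
  unfolding in_sub_def Div_def mul_e_def by (auto split: if_splits)

context LA begin

lemma tbr_nz: assumes "tbr br x y \<sigma> \<noteq> 0"
  shows "\<exists>\<alpha>. finite \<sigma> \<and> \<alpha> \<noteq> {} \<and> \<alpha> \<subseteq> \<sigma> \<and> \<sigma> - \<alpha> \<noteq> {} \<and> x \<alpha> \<noteq> 0 \<and> y (\<sigma> - \<alpha>) \<noteq> 0"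
proof -
  have f: "finite \<sigma>" using assms tbr_inf by blast
  then have "(\<Sum>\<alpha>\<in>Pw \<sigma>. br (x \<alpha>) (y (\<sigma> - \<alpha>))) \<noteq> 0" using assms by (simp add: tbr_eq)
  then obtain \<alpha> where "\<alpha> \<in> Pw \<sigma>" "br (x \<alpha>) (y (\<sigma> - \<alpha>)) \<noteq> 0"
    by (rule sum.not_neutral_contains_not_neutral)
  then show ?thesis using f unfolding Pw_def by (auto intro!: exI[of _ \<alpha>])
qed

lemma tilde_tbr: assumes "tilde x" "tilde y" shows "tilde (tbr br x y)"
  unfolding tilde_def
proof (intro conjI)
  have "{\<sigma>. tbr br x y \<sigma> \<noteq> 0} \<subseteq> (\<lambda>(a,b). a \<union> b) ` ({\<sigma>. x \<sigma> \<noteq> 0} \<times> {\<sigma>. y \<sigma> \<noteq> 0})"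
  proof
    fix \<sigma> assume "\<sigma> \<in> {\<sigma>. tbr br x y \<sigma> \<noteq> 0}"
    then obtain \<alpha> where "\<alpha> \<subseteq> \<sigma>" "x \<alpha> \<noteq> 0" "y (\<sigma> - \<alpha>) \<noteq> 0" using tbr_nz by blast
    then show "\<sigma> \<in> (\<lambda>(a,b). a \<union> b) ` ({\<sigma>. x \<sigma> \<noteq> 0} \<times> {\<sigma>. y \<sigma> \<noteq> 0})"
      by (intro image_eqI[of _ _ "(\<alpha>, \<sigma> - \<alpha>)"]) auto
  qed
  moreover have "finite ((\<lambda>(a,b). a \<union> b) ` ({\<sigma>. x \<sigma> \<noteq> 0} \<times> {\<sigma>. y \<sigma> \<noteq> 0}))"
    using assms unfolding tilde_def by (intro finite_imageI finite_cartesian_product) auto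
  ultimately show "finite {\<sigma>. tbr br x y \<sigma> \<noteq> 0}" by (rule finite_subset)
next
  show "\<forall>\<sigma>. tbr br x y \<sigma> \<noteq> 0 \<longrightarrow> finite \<sigma> \<and> \<sigma> \<noteq> {}"
  proof (intro allI impI)
    fix \<sigma> assume "tbr br x y \<sigma> \<noteq> 0"
    from tbr_nz[OF this] obtain \<alpha> where "finite \<sigma>" "\<alpha> \<noteq> {}" "\<alpha> \<subseteq> \<sigma>" by blast
    then show "finite \<sigma> \<and> \<sigma> \<noteq> {}" by blast
  qed
qed

lemma Div_tbrL: assumes "Div \<pi> v" shows "Div \<pi> (tbr br v x)"
  unfolding Div_def
proof (intro allI impI)
  fix \<sigma> assume "tbr br v x \<sigma> \<noteq> 0"
  from tbr_nz[OF this] obtain \<alpha> where "\<alpha> \<subseteq> \<sigma>" "v \<alpha> \<noteq> 0" by blast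
  then show "\<pi> \<subseteq> \<sigma>" using assms unfolding Div_def by blast
qed
lemma Div_tbrR: assumes "Div \<pi> v" shows "Div \<pi> (tbr br x v)"
  unfolding Div_def
proof (intro allI impI)
  fix \<sigma> assume "tbr br x v \<sigma> \<noteq> 0"
  from tbr_nz[OF this] obtain \<alpha> where "v (\<sigma> - \<alpha>) \<noteq> 0" by blast
  then show "\<pi> \<subseteq> \<sigma>" using assms unfolding Div_def by blast
qed
lemma Div_kill: assumes "\<pi> \<noteq> {}" "Div \<pi> v" "Div \<pi> w" shows "tbr br v w = 0"
proof (rule ext, rule ccontr)
  fix \<sigma> assume "tbr br v w \<sigma> \<noteq> (0::nat set \<Rightarrow> 'l) \<sigma>"
  then have "tbr br v w \<sigma> \<noteq> 0" by simp
  then obtain \<alpha> where "\<alpha> \<subseteq> \<sigma>" "v \<alpha> \<noteq> 0" "w (\<sigma> - \<alpha>) \<noteq> 0" using tbr_nz[of v w \<sigma>] by blast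
  then have "\<pi> \<subseteq> \<alpha>" "\<pi> \<subseteq> \<sigma> - \<alpha>" using assms unfolding Div_def by auto
  then show False using assms(1) by blast
qed

end

definition good :: "((nat set \<Rightarrow> 'l) \<Rightarrow> (nat set \<Rightarrow> 'l::ab_group_add)) \<Rightarrow> bool" where
  "good f \<longleftrightarrow> (\<forall>a. tilde a \<longrightarrow> tilde (f a)) \<and> (\<forall>a b. tilde a \<longrightarrow> tilde b \<longrightarrow> f (a+b) = f a + f b)
     \<and> (\<forall>a. \<not> tilde a \<longrightarrow> f a = 0) \<and> (\<forall>\<pi> a. tilde a \<longrightarrow> Div \<pi> a \<longrightarrow> Div \<pi> (f a))"

typedef (overloaded) ('l::ab_group_add) op = "{f::(nat set \<Rightarrow> 'l) \<Rightarrow> (nat set \<Rightarrow> 'l). good f}" morphisms app Abs_op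
  by (rule exI[of _ "\<lambda>_. 0"]) (simp add: good_def)

lemma good_app: "good (app p)"
  using app by auto

lemma app_tilde: "tilde v \<Longrightarrow> tilde (app p v)"
  using good_app[of p] unfolding good_def by blast
lemma app_add: "tilde a \<Longrightarrow> tilde b \<Longrightarrow> app p (a + b) = app p a + app p b"
  using good_app[of p] unfolding good_def by blast
lemma app_out: "\<not> tilde a \<Longrightarrow> app p a = 0"
  using good_app[of p] unfolding good_def by blast
lemma app_Div: "tilde a \<Longrightarrow> Div \<pi> a \<Longrightarrow> Div \<pi> (app p a)"
  using good_app[of p] unfolding good_def by blast
lemma app_0[simp]: "app p 0 = 0"
  using app_add[of 0 0 p] by simp
lemma app_minus: "tilde a \<Longrightarrow> app p (- a) = - app p a"
proof -
  assume a: "tilde a"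
  have "app p a + app p (-a) = 0" using app_add[of a "-a" p] tilde_minus[OF a] a by simp
  then show ?thesis by (metis minus_unique)
qed
lemma app_diff: "tilde a \<Longrightarrow> tilde b \<Longrightarrow> app p (a - b) = app p a - app p b"
  using app_add[of a "-b" p] tilde_minus[of b] app_minus[of b p] by simp
lemma app_sum: "(\<And>i. i \<in> A \<Longrightarrow> tilde (f i)) \<Longrightarrow> app p (sum f A) = (\<Sum>i\<in>A. app p (f i))"
proof (induction A rule: infinite_finite_induct)
  case (insert x F)
  have "app p (sum f (insert x F)) = app p (f x + sum f F)" by (subst sum.insert[OF insert.hyps], rule refl)
  also have "\<dots> = app p (f x) + app p (sum f F)" using insert.prems by (intro app_add tilde_sum) auto
  also have "\<dots> = app p (f x) + (\<Sum>i\<in>F. app p (f i))" using insert by simp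
  also have "\<dots> = (\<Sum>i\<in>insert x F. app p (f i))" by (rule sum.insert[OF insert.hyps, symmetric])
  finally show ?case .
qed simp_all

lemma op_eq: "(\<And>v. tilde v \<Longrightarrow> app p v = app q v) \<Longrightarrow> p = q"
  by (metis app_inject app_out ext)

lemma good_zero: "good (\<lambda>_. 0)" by (simp add: good_def)
lemma good_plus: "good (\<lambda>v. app p v + app q v)"
  unfolding good_def by (auto simp: app_tilde app_add app_out app_Div tilde_add Div_add add_ac)
lemma good_uminus: "good (\<lambda>v. - app p v)"
  unfolding good_def by (auto simp: app_tilde app_add app_out app_Div tilde_minus Div_minus add_ac)
lemma good_minus: "good (\<lambda>v. app p v - app q v)"
  unfolding good_def by (auto simp: app_tilde app_add app_out app_Div tilde_diff Div_diff algebra_simps)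
lemma good_times: "good (\<lambda>v. app q (app p v))"
  unfolding good_def by (auto simp: app_tilde app_add app_out app_Div)
lemma good_one: "good (\<lambda>v. if tilde v then v else 0)"
  unfolding good_def by (auto simp: tilde_add)

instantiation op :: (ab_group_add) "{ring, monoid_mult}"
begin
definition "0 = Abs_op (\<lambda>_. 0)"
definition "p + q = Abs_op (\<lambda>v. app p v + app q v)"
definition "- p = Abs_op (\<lambda>v. - app p v)"
definition "p - q = Abs_op (\<lambda>v. app p v - app q v)"
definition "p * q = Abs_op (\<lambda>v. app q (app p v))"
definition "1 = Abs_op (\<lambda>v. if tilde v then v else 0)"

lemma app_zero_op[simp]: "app 0 v = 0"
  unfolding zero_op_def by (subst Abs_op_inverse) (simp_all add: good_zero)
lemma app_plus_op[simp]: "app (p + q) v = app p v + app q v"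
  unfolding plus_op_def by (subst Abs_op_inverse) (simp_all add: good_plus)
lemma app_uminus_op[simp]: "app (- p) v = - app p v"
  unfolding uminus_op_def by (subst Abs_op_inverse) (simp_all add: good_uminus)
lemma app_minus_op[simp]: "app (p - q) v = app p v - app q v"
  unfolding minus_op_def by (subst Abs_op_inverse) (simp_all add: good_minus)
lemma app_times_op[simp]: "app (p * q) v = app q (app p v)"
  unfolding times_op_def by (subst Abs_op_inverse) (simp_all add: good_times)
lemma app_one_op[simp]: "app 1 v = (if tilde v then v else 0)"
  unfolding one_op_def by (subst Abs_op_inverse) (simp_all add: good_one)

instance
proof
  fix a b c :: "'a op"
  show "a + b + c = a + (b + c)" by (rule op_eq) (simp add: add.assoc)
  show "a + b = b + a" by (rule op_eq) (simp add: add.commute)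
  show "0 + a = a" by (rule op_eq) simp
  show "- a + a = 0" by (rule op_eq) simp
  show "a - b = a + - b" by (rule op_eq) simp
  show "a * b * c = a * (b * c)" by (rule op_eq) simp
  show "(a + b) * c = a * c + b * c" by (rule op_eq) (simp add: app_add app_tilde)
  show "a * (b + c) = a * b + a * c" by (rule op_eq) simp
  show "1 * a = a" by (rule op_eq) simp
  show "a * 1 = a" by (rule op_eq) (simp add: app_tilde)
qed
end

definition adop :: "('l::ab_group_add \<Rightarrow> 'l \<Rightarrow> 'l) \<Rightarrow> (nat set \<Rightarrow> 'l) \<Rightarrow> 'l op" where
  "adop br y = Abs_op (\<lambda>v. if tilde v then tbr br v y else 0)"

lemma app_sum_op: "app (sum f A) v = (\<Sum>i\<in>A. app (f i) v)"
  by (induction A rule: infinite_finite_induct) simp_all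

lemma fun_sum_apply: "(sum f A) \<sigma> = (\<Sum>i\<in>A. f i \<sigma>)"
  by (induction A rule: infinite_finite_induct) simp_all

context LA begin

lemma good_ad: assumes "tilde y" shows "good (\<lambda>v. if tilde v then tbr br v y else 0)"
  unfolding good_def using assms by (auto simp: tilde_tbr tbr_addL tilde_add Div_tbrL)

lemma app_adop: "tilde y \<Longrightarrow> tilde v \<Longrightarrow> app (adop br y) v = tbr br v y"
  unfolding adop_def by (subst Abs_op_inverse) (simp_all add: good_ad)

lemma adop_add: "tilde u \<Longrightarrow> tilde w \<Longrightarrow> adop br (u + w) = adop br u + adop br w"
  by (rule op_eq) (simp add: app_adop tilde_add tbr_addR)

lemma adop_0: "adop br 0 = 0"
  by (rule op_eq) (simp add: app_adop)

lemma adop_sum: "(\<And>i. i \<in> A \<Longrightarrow> tilde (f i)) \<Longrightarrow> adop br (sum f A) = (\<Sum>i\<in>A. adop br (f i))"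
proof (induction A rule: infinite_finite_induct)
  case (insert x F)
  have "adop br (sum f (insert x F)) = adop br (f x + sum f F)" by (subst sum.insert[OF insert.hyps], rule refl)
  also have "\<dots> = adop br (f x) + adop br (sum f F)" using insert.prems by (intro adop_add tilde_sum) auto
  also have "\<dots> = adop br (f x) + (\<Sum>i\<in>F. adop br (f i))" using insert by simp
  also have "\<dots> = (\<Sum>i\<in>insert x F. adop br (f i))" by (rule sum.insert[OF insert.hyps, symmetric])
  finally show ?case .
qed (simp_all add: adop_0)

lemma adop_jac: "tilde u \<Longrightarrow> tilde w \<Longrightarrow> adop br (tbr br u w) = adop br u * adop br w - adop br w * adop br u"
  by (rule op_eq) (simp add: app_adop tilde_tbr tbr_jac)

end

definition sg :: "nat \<Rightarrow> 'a::ab_group_add \<Rightarrow> 'a" where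
  "sg m x = (if even m then x else - x)"

lemma sg_sum: "sg m (sum f A) = (\<Sum>i\<in>A. sg m (f i))"
  unfolding sg_def by (simp add: sum_negf)
lemma sg_0[simp]: "sg m 0 = 0" unfolding sg_def by simp
lemma sg_mult_right: "sg m (x::'a::ring) * y = sg m (x * y)" unfolding sg_def by simp
lemma sg_mult_left: "y * sg m (x::'a::ring) = sg m (y * x)" unfolding sg_def by simp
lemma sg_Suc: "sg (Suc m) x = - sg m x" unfolding sg_def by simp

lemma sum_const_lessThan: "finite A \<Longrightarrow> sum (\<lambda>_. x) A = sum (\<lambda>_. x) {..<card A}"
  by (induction A rule: finite_induct) (simp_all add: add.commute)

locale W = LA br for br :: "'l::ab_group_add \<Rightarrow> 'l \<Rightarrow> 'l" +
  fixes \<omega> :: "nat \<Rightarrow> nat set \<Rightarrow> 'l" and n :: nat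
  assumes fam: "\<And>i. i < n \<Longrightarrow> tilde (\<omega> i)"
    and comm: "\<And>i j. i < n \<Longrightarrow> j < n \<Longrightarrow> tbr br (\<omega> i) (\<omega> j) = (\<lambda>_. 0)"
    and subD: "\<And>i. i < n \<Longrightarrow> \<exists>\<pi>. \<pi> \<noteq> {} \<and> Div \<pi> (\<omega> i)"
begin

definition A :: "nat \<Rightarrow> 'l op" where "A i = adop br (\<omega> i)"

lemma app_A: "i < n \<Longrightarrow> tilde v \<Longrightarrow> app (A i) v = tbr br v (\<omega> i)"
  unfolding A_def by (simp add: app_adop fam)

lemma A_comm: assumes "i < n" "j < n" shows "A i * A j = A j * A i"
proof (rule op_eq)
  fix v :: "nat set \<Rightarrow> 'l" assume v: "tilde v"
  have "tbr br v (tbr br (\<omega> i) (\<omega> j)) = 0" using comm[OF assms] by simp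
  then have "tbr br (tbr br v (\<omega> i)) (\<omega> j) = tbr br (tbr br v (\<omega> j)) (\<omega> i)"
    by (simp add: tbr_jac)
  then show "app (A i * A j) v = app (A j * A i) v"
    using assms v by (simp add: app_A tilde_tbr fam)
qed

lemma A_kill: assumes "i < n" shows "A i * p * A i = 0"
proof (rule op_eq)
  fix v :: "nat set \<Rightarrow> 'l" assume v: "tilde v"
  obtain \<pi> where pi: "\<pi> \<noteq> {}" "Div \<pi> (\<omega> i)" using subD[OF assms] by blast
  have t: "tilde (tbr br v (\<omega> i))" using v fam[OF assms] by (simp add: tilde_tbr)
  have d: "Div \<pi> (tbr br v (\<omega> i))" using pi by (simp add: Div_tbrR)
  have "Div \<pi> (app p (tbr br v (\<omega> i)))" using app_Div[OF t d] .
  then have "tbr br (app p (tbr br v (\<omega> i))) (\<omega> i) = 0" using pi by (intro Div_kill) auto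
  then show "app (A i * p * A i) v = app 0 v"
    using assms v t by (simp add: app_A app_tilde)
qed

definition prodA :: "nat set \<Rightarrow> 'l op" where
  "prodA S = fold (\<lambda>i acc. acc * A i) (sorted_list_of_set S) 1"

lemma fold_mult: "fold (\<lambda>i acc. acc * A i) xs c = c * fold (\<lambda>i acc. acc * A i) xs 1"
proof (induction xs arbitrary: c)
  case (Cons x xs)
  show ?case using Cons[of "c * A x"] Cons[of "A x"] by (simp add: mult.assoc)
qed simp

lemma prodA_empty[simp]: "prodA {} = 1"
  unfolding prodA_def by simp

lemma prodA_insert:
  assumes "finite S" "S \<subseteq> {..<n}" "k < n" "k \<notin> S"
  shows "prodA (insert k S) = prodA S * A k" "prodA (insert k S) = A k * prodA S"
proof -
  let ?f = "\<lambda>i acc. acc * A i"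
  have ms: "mset (sorted_list_of_set X) = mset_set X" if "finite X" for X :: "nat set"
    by (metis mset_sorted_list_of_multiset sorted_list_of_mset_set)
  have c: "?f x \<circ> ?f y = ?f y \<circ> ?f x" if "x \<in> set (sorted_list_of_set (insert k S))" "y \<in> set (sorted_list_of_set (insert k S))" for x y
  proof -
    have setx: "set (sorted_list_of_set (insert k S)) = insert k S" using assms(1) by (simp only: set_sorted_list_of_set finite_insert)
    have "x < n" "y < n" using that assms unfolding setx by auto
    then show ?thesis by (auto simp: fun_eq_iff mult.assoc A_comm)
  qed
  have e1: "fold ?f (sorted_list_of_set (insert k S)) = fold ?f (sorted_list_of_set S @ [k])"
    by (rule fold_multiset_equiv[OF c]) (simp_all add: ms assms)
  have "prodA (insert k S) = fold ?f (sorted_list_of_set S @ [k]) 1"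
    unfolding prodA_def e1 ..
  then show "prodA (insert k S) = prodA S * A k" unfolding prodA_def by simp
  have e2: "fold ?f (sorted_list_of_set (insert k S)) = fold ?f (k # sorted_list_of_set S)"
    by (rule fold_multiset_equiv[OF c]) (simp_all add: ms assms)
  have "prodA (insert k S) = fold ?f (k # sorted_list_of_set S) 1"
    unfolding prodA_def e2 ..
  then show "prodA (insert k S) = A k * prodA S" unfolding prodA_def using fold_mult[of _ "A k"] by simp
qed

lemma prodA_remove:
  assumes "finite S" "S \<subseteq> {..<n}" "k \<in> S"
  shows "prodA S = prodA (S - {k}) * A k" "prodA S = A k * prodA (S - {k})"
proof -
  have e: "S = insert k (S - {k})" using assms by blast
  have k: "k < n" using assms by auto
  show "prodA S = prodA (S - {k}) * A k" using prodA_insert(1)[of "S - {k}" k] assms k e by auto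
  show "prodA S = A k * prodA (S - {k})" using prodA_insert(2)[of "S - {k}" k] assms k e by auto
qed

lemma prodA_Un:
  assumes "finite R" "finite S" "S \<subseteq> {..<n}" "R \<subseteq> {..<n}" "S \<inter> R = {}"
  shows "prodA S * prodA R = prodA (S \<union> R)"
  using assms
proof (induction R rule: finite_induct)
  case (insert k R)
  have "prodA S * prodA (insert k R) = prodA S * (prodA R * A k)"
    using insert by (simp add: prodA_insert(1))
  also have "\<dots> = prodA S * prodA R * A k" by (simp add: mult.assoc)
  also have "\<dots> = prodA (S \<union> R) * A k" using insert by simp
  also have "\<dots> = prodA (insert k (S \<union> R))" using insert by (subst prodA_insert(1)) auto
  finally show ?case by simp
qed simp

lemma prodA_overlap:
  assumes "finite R" "finite S" "S \<subseteq> {..<n}" "R \<subseteq> {..<n}" "S \<inter> R \<noteq> {}"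
  shows "prodA S * p * prodA R = 0"
proof -
  obtain k where k: "k \<in> S" "k \<in> R" using assms by blast
  have kn: "k < n" using k assms by auto
  have "prodA S * p * prodA R = prodA (S - {k}) * (A k * p * A k) * prodA (R - {k})"
    using prodA_remove(1)[of S k] prodA_remove(2)[of R k] assms k by (simp add: mult.assoc)
  also have "\<dots> = 0" using A_kill[OF kn] by simp
  finally show ?thesis .
qed

lemma opprod_eq:
  assumes "set xs \<subseteq> {..<n}" "tilde x"
  shows "fold (\<lambda>d v. d v) (map (\<lambda>i. ad br (\<omega> i)) xs) (app c x) = app (fold (\<lambda>i acc. acc * A i) xs c) x"
  using assms(1)
proof (induction xs arbitrary: c)
  case (Cons i xs)
  have i: "i < n" using Cons by auto
  have "ad br (\<omega> i) (app c x) = app (c * A i) x"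
    using i assms(2) by (simp add: ad_def app_A app_tilde)
  then show ?case using Cons.IH[of "c * A i"] Cons.prems by simp
qed simp

definition Ks :: "nat \<Rightarrow> nat set set" where
  "Ks k = {S. S \<subseteq> {..<n} \<and> card S = k}"

lemma Ks_finite[simp]: "finite (Ks k)"
  unfolding Ks_def by (rule finite_subset[of _ "Pow {..<n}"]) auto

definition U :: "nat \<Rightarrow> 'l op" where
  "U k = (\<Sum>S\<in>Ks k. prodA S)"

lemma adU_eq: assumes "tilde x" shows "adU br \<omega> n k x = app (U k) x"
proof -
  have "adU br \<omega> n k x = (\<lambda>\<sigma>. \<Sum>S\<in>Ks k. app (prodA S) x \<sigma>)"
  proof -
    have "opprod (map (\<lambda>i. ad br (\<omega> i)) (sorted_list_of_set S)) x = app (prodA S) x" if "S \<in> Ks k" for S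
    proof -
      have "finite S" "S \<subseteq> {..<n}" using that unfolding Ks_def by (auto intro: finite_subset)
      then have "set (sorted_list_of_set S) \<subseteq> {..<n}" by simp
      then have "fold (\<lambda>d v. d v) (map (\<lambda>i. ad br (\<omega> i)) (sorted_list_of_set S)) (app 1 x) = app (prodA S) x"
        unfolding prodA_def using opprod_eq assms by blast
      then show ?thesis using assms by (simp add: opprod_def)
    qed
    then show ?thesis unfolding adU_def Uk_def Ks_def[symmetric] by (intro ext sum.cong) auto
  qed
  also have "\<dots> = app (U k) x" unfolding U_def by (rule ext) (simp add: app_sum_op fun_sum_apply)
  finally show ?thesis .
qed

end

context W begin

lemma Ks_sub: "S \<in> Ks k \<Longrightarrow> finite S \<and> S \<subseteq> {..<n}"
  unfolding Ks_def by (auto intro: finite_subset)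

lemma G:
  "(\<Sum>S\<in>Ks a. \<Sum>R\<in>Ks b. if S \<inter> R = {} then g S R else 0)
   = (\<Sum>T\<in>Ks (a+b). \<Sum>S\<in>{S. S \<subseteq> T \<and> card S = a}. g S (T - S))"
proof -
  have "(\<Sum>S\<in>Ks a. \<Sum>R\<in>Ks b. if S \<inter> R = {} then g S R else 0)
      = (\<Sum>(S,R)\<in>Ks a \<times> Ks b. if S \<inter> R = {} then g S R else 0)"
    by (simp add: sum.cartesian_product)
  also have "\<dots> = (\<Sum>(S,R)\<in>{p\<in>Ks a \<times> Ks b. fst p \<inter> snd p = {}}. g S R)"
    apply (subst sum.inter_filter)
     apply simp
    apply (rule sum.cong)
     apply (auto split: prod.split)
    done
  also have "\<dots> = (\<Sum>(T,S)\<in>Sigma (Ks (a+b)) (\<lambda>T. {S. S \<subseteq> T \<and> card S = a}). g S (T - S))"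
  proof (rule sum.reindex_bij_witness[where i="\<lambda>(T,S). (S, T - S)" and j="\<lambda>(S,R). (S \<union> R, S)"
      and S="{p\<in>Ks a \<times> Ks b. fst p \<inter> snd p = {}}" and T="Sigma (Ks (a+b)) (\<lambda>T. {S. S \<subseteq> T \<and> card S = a})"
      and g="\<lambda>(S,R). g S R" and h="\<lambda>(T,S). g S (T - S)"])
    fix p assume p: "p \<in> {p \<in> Ks a \<times> Ks b. fst p \<inter> snd p = {}}"
    obtain S R where pe: "p = (S,R)" by (cases p)
    have pm: "S \<in> Ks a" "R \<in> Ks b" and d: "S \<inter> R = {}" using p pe by auto
    have S: "finite S" "S \<subseteq> {..<n}" "card S = a" using Ks_sub[OF pm(1)] pm(1) unfolding Ks_def by auto
    have R: "finite R" "R \<subseteq> {..<n}" "card R = b" using Ks_sub[OF pm(2)] pm(2) unfolding Ks_def by auto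
    show "(case case p of (S, R) \<Rightarrow> (S \<union> R, S) of (T, S) \<Rightarrow> (S, T - S)) = p"
      using pe d by auto
    show "(case p of (S, R) \<Rightarrow> (S \<union> R, S)) \<in> Sigma (Ks (a + b)) (\<lambda>T. {S. S \<subseteq> T \<and> card S = a})"
    proof -
      have "card (S \<union> R) = a + b" using card_Un_disjoint[OF S(1) R(1) d] S(3) R(3) by simp
      then show ?thesis using pe S(2) R(2) S(3) unfolding Ks_def by simp
    qed
    show "(case case p of (S, R) \<Rightarrow> (S \<union> R, S) of (T, S) \<Rightarrow> g S (T - S)) = (case p of (S, R) \<Rightarrow> g S R)"
    proof -
      have "R - S = R" using d by blast
      then show ?thesis using pe by (simp add: Un_Diff)
    qed
  next
    fix q assume q: "q \<in> Sigma (Ks (a + b)) (\<lambda>T. {S. S \<subseteq> T \<and> card S = a})"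
    obtain T S where qe: "q = (T,S)" by (cases q)
    have qm: "T \<in> Ks (a+b)" "S \<subseteq> T" "card S = a" using q qe by auto
    have T: "finite T" "T \<subseteq> {..<n}" "card T = a + b" using Ks_sub[OF qm(1)] qm(1) unfolding Ks_def by auto
    have S: "S \<subseteq> T" "card S = a" using qm by auto
    have fS: "finite S" using T S finite_subset by blast
    show "(case case q of (T, S) \<Rightarrow> (S, T - S) of (S, R) \<Rightarrow> (S \<union> R, S)) = q"
      using qe S by auto
    show "(case q of (T, S) \<Rightarrow> (S, T - S)) \<in> {p \<in> Ks a \<times> Ks b. fst p \<inter> snd p = {}}"
    proof -
      have "card (T - S) = b" using card_Diff_subset[OF fS S(1)] T(3) S(2) by simp
      moreover have "S \<subseteq> {..<n}" "T - S \<subseteq> {..<n}" using S(1) T(2) by auto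
      ultimately show ?thesis using qe S(2) unfolding Ks_def by simp
    qed
  qed
  also have "\<dots> = (\<Sum>T\<in>Ks (a+b). \<Sum>S\<in>{S. S \<subseteq> T \<and> card S = a}. g S (T - S))"
  proof -
    have fin: "\<forall>T\<in>Ks (a + b). finite {S. S \<subseteq> T \<and> card S = a}"
    proof
      fix T assume "T \<in> Ks (a+b)"
      then have "finite T" using Ks_sub by blast
      then show "finite {S. S \<subseteq> T \<and> card S = a}" by (rule finite_subset[rotated, OF finite_Pow_iff[THEN iffD2]]) auto
    qed
    show ?thesis by (rule sum.Sigma[OF Ks_finite fin, symmetric])
  qed
  finally show ?thesis .
qed

lemma U_mult: "U a * U b = (\<Sum>T\<in>Ks (a+b). \<Sum>S\<in>{S. S \<subseteq> T \<and> card S = a}. prodA T)"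
proof -
  have "U a * U b = (\<Sum>S\<in>Ks a. \<Sum>R\<in>Ks b. prodA S * prodA R)"
    unfolding U_def sum_distrib_right sum_distrib_left by (rule sum.swap)
  also have "\<dots> = (\<Sum>S\<in>Ks a. \<Sum>R\<in>Ks b. if S \<inter> R = {} then prodA (S \<union> R) else 0)"
  proof (intro sum.cong refl)
    fix S R assume "S \<in> Ks a" "R \<in> Ks b"
    then have S: "finite S" "S \<subseteq> {..<n}" and R: "finite R" "R \<subseteq> {..<n}" using Ks_sub by blast+
    show "prodA S * prodA R = (if S \<inter> R = {} then prodA (S \<union> R) else 0)"
      using prodA_Un[OF R(1) S(1) S(2) R(2)] prodA_overlap[OF R(1) S(1) S(2) R(2), of 1] by auto
  qed
  also have "\<dots> = (\<Sum>T\<in>Ks (a+b). \<Sum>S\<in>{S. S \<subseteq> T \<and> card S = a}. prodA (S \<union> (T - S)))"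
    by (rule G)
  also have "\<dots> = (\<Sum>T\<in>Ks (a+b). \<Sum>S\<in>{S. S \<subseteq> T \<and> card S = a}. prodA T)"
    by (intro sum.cong refl) (simp add: Un_absorb1)
  finally show ?thesis .
qed

lemma U_mult_count:
  "U a * U b = (\<Sum>j<((a+b) choose a). U (a+b))"
proof -
  have "U a * U b = (\<Sum>T\<in>Ks (a+b). \<Sum>j<((a+b) choose a). prodA T)"
    unfolding U_mult
  proof (intro sum.cong refl)
    fix T assume T: "T \<in> Ks (a+b)"
    have "finite T" using Ks_sub[OF T] by blast
    have "card T = a + b" using T unfolding Ks_def by simp
    have c: "card {S. S \<subseteq> T \<and> card S = a} = (a+b) choose a" using n_subsets[OF \<open>finite T\<close>, of a] \<open>card T = a + b\<close> by simp
    have "finite {S. S \<subseteq> T \<and> card S = a}" using \<open>finite T\<close> by (rule finite_subset[rotated, OF finite_Pow_iff[THEN iffD2]]) auto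
    then show "(\<Sum>S\<in>{S. S \<subseteq> T \<and> card S = a}. prodA T) = (\<Sum>j<(a+b) choose a. prodA T)"
      by (subst sum_const_lessThan) (simp_all add: c)
  qed
  also have "\<dots> = (\<Sum>j<((a+b) choose a). U (a+b))"
    unfolding U_def by (rule sum.swap)
  finally show ?thesis .
qed

end

context W begin

lemma ad_prodA:
  assumes y: "tilde y"
  shows "finite T \<Longrightarrow> T \<subseteq> {..<n} \<Longrightarrow>
    adop br (app (prodA T) y) = (\<Sum>S\<in>Pow T. sg (card S) (prodA S * adop br y * prodA (T - S)))"
proof (induction T rule: finite_induct)
  case empty
  show ?case using y by (simp add: sg_def)
next
  case (insert k T)
  define Y where "Y = adop br y"
  define F where "F S = sg (card S) (prodA S * Y * prodA (insert k T - S))" for S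
  have k: "k < n" and Tn: "T \<subseteq> {..<n}" using insert.prems by auto
  define u where "u = app (prodA T) y"
  have u: "tilde u" unfolding u_def using y by (rule app_tilde)
  have "app (prodA (insert k T)) y = tbr br u (\<omega> k)"
    using prodA_insert(1)[OF insert.hyps(1) Tn k insert.hyps(2)] u k by (simp add: u_def app_A)
  then have "adop br (app (prodA (insert k T)) y) = adop br u * A k - A k * adop br u"
    using adop_jac[OF u fam[OF k]] by (simp add: A_def)
  also have "adop br u = (\<Sum>S\<in>Pow T. sg (card S) (prodA S * Y * prodA (T - S)))"
    using insert.IH[OF Tn] by (simp add: u_def Y_def)
  finally have e: "adop br (app (prodA (insert k T)) y) =
     (\<Sum>S\<in>Pow T. sg (card S) (prodA S * Y * prodA (T - S)) * A k) - (\<Sum>S\<in>Pow T. A k * sg (card S) (prodA S * Y * prodA (T - S)))"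
    by (simp add: sum_distrib_left sum_distrib_right)
  have e1: "sg (card S) (prodA S * Y * prodA (T - S)) * A k = F S" if "S \<in> Pow T" for S
  proof -
    have TS: "T - S \<subseteq> {..<n}" "finite (T - S)" "k \<notin> T - S" using Tn insert.hyps by auto
    have "prodA (T - S) * A k = prodA (insert k (T - S))"
      using prodA_insert(1)[OF TS(2) TS(1) k TS(3)] by simp
    moreover have "insert k (T - S) = insert k T - S" using that insert.hyps by auto
    ultimately show ?thesis unfolding F_def by (simp add: sg_mult_right mult.assoc)
  qed
  have e2: "A k * sg (card S) (prodA S * Y * prodA (T - S)) = - F (insert k S)" if "S \<in> Pow T" for S
  proof -
    have fS: "finite S" "S \<subseteq> {..<n}" "k \<notin> S" using that insert.hyps Tn by (auto intro: finite_subset)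
    have "A k * prodA S = prodA (insert k S)" using prodA_insert(2)[OF fS(1,2) k fS(3)] by simp
    moreover have "insert k T - insert k S = T - S" using that insert.hyps by auto
    moreover have "card (insert k S) = Suc (card S)" using fS by simp
    ultimately show ?thesis unfolding F_def by (simp add: sg_mult_left sg_Suc mult.assoc[symmetric])
  qed
  have "adop br (app (prodA (insert k T)) y) = (\<Sum>S\<in>Pow T. F S) + (\<Sum>S\<in>Pow T. F (insert k S))"
    unfolding e using e1 e2 by (simp add: sum_negf)
  also have "(\<Sum>S\<in>Pow T. F (insert k S)) = (\<Sum>S\<in>insert k ` Pow T. F S)"
  proof (rule sum.reindex[symmetric, unfolded comp_def])
    show "inj_on (insert k) (Pow T)"
    proof (rule inj_onI)
      fix x y assume xy: "x \<in> Pow T" "y \<in> Pow T" "insert k x = insert k y"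
      then have "k \<notin> x" "k \<notin> y" using insert.hyps(2) by auto
      then show "x = y" using xy(3) by (metis Diff_insert_absorb)
    qed
  qed
  also have "(\<Sum>S\<in>Pow T. F S) + (\<Sum>S\<in>insert k ` Pow T. F S) = (\<Sum>S\<in>Pow (insert k T). F S)"
    unfolding Pow_insert
    by (rule sum.union_disjoint[symmetric]) (use insert.hyps in auto)
  finally show ?case unfolding F_def Y_def .
qed

lemma ad_U:
  assumes y: "tilde y"
  shows "adop br (app (U k) y) = (\<Sum>m\<in>{..k}. sg m (U m * adop br y * U (k - m)))"
proof -
  define Y where "Y = adop br y"
  let ?h = "\<lambda>T S. sg (card S) (prodA S * Y * prodA (T - S))"
  have "adop br (app (U k) y) = adop br (\<Sum>T\<in>Ks k. app (prodA T) y)"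
    unfolding U_def by (simp add: app_sum_op)
  also have "\<dots> = (\<Sum>T\<in>Ks k. adop br (app (prodA T) y))"
    using y by (intro adop_sum app_tilde)
  also have "\<dots> = (\<Sum>T\<in>Ks k. \<Sum>S\<in>Pow T. ?h T S)"
  proof (rule sum.cong[OF refl])
    fix T assume "T \<in> Ks k"
    then have "finite T" "T \<subseteq> {..<n}" using Ks_sub by blast+
    then show "adop br (app (prodA T) y) = (\<Sum>S\<in>Pow T. ?h T S)"
      using ad_prodA[OF y] by (simp add: Y_def)
  qed
  also have "\<dots> = (\<Sum>T\<in>Ks k. \<Sum>m\<in>{..k}. \<Sum>S\<in>{S. S \<subseteq> T \<and> card S = m}. sg m (prodA S * Y * prodA (T - S)))"
  proof (rule sum.cong[OF refl])
    fix T assume T: "T \<in> Ks k"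
    then have fT: "finite T" using Ks_sub by blast
    have cT: "card T = k" using T unfolding Ks_def by simp
    have "(\<Sum>m\<in>{..k}. sum (?h T) {S. S \<in> Pow T \<and> card S = m}) = sum (?h T) (Pow T)"
    proof (rule sum.group)
      show "finite (Pow T)" using fT by simp
      show "finite {..k}" by simp
      show "card ` Pow T \<subseteq> {..k}" using card_mono[OF fT] cT by auto
    qed
    moreover have "sum (?h T) {S. S \<in> Pow T \<and> card S = m} = (\<Sum>S\<in>{S. S \<subseteq> T \<and> card S = m}. sg m (prodA S * Y * prodA (T - S)))" for m
      by (rule sum.cong) auto
    ultimately show "(\<Sum>S\<in>Pow T. ?h T S) = (\<Sum>m\<in>{..k}. \<Sum>S\<in>{S. S \<subseteq> T \<and> card S = m}. sg m (prodA S * Y * prodA (T - S)))"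
      by simp
  qed
  also have "\<dots> = (\<Sum>m\<in>{..k}. \<Sum>T\<in>Ks k. \<Sum>S\<in>{S. S \<subseteq> T \<and> card S = m}. sg m (prodA S * Y * prodA (T - S)))"
    by (rule sum.swap)
  also have "\<dots> = (\<Sum>m\<in>{..k}. sg m (U m * Y * U (k - m)))"
  proof (rule sum.cong[OF refl])
    fix m assume "m \<in> {..k}"
    then have mk: "m + (k - m) = k" by simp
    have "(\<Sum>T\<in>Ks k. \<Sum>S\<in>{S. S \<subseteq> T \<and> card S = m}. sg m (prodA S * Y * prodA (T - S)))
        = (\<Sum>S\<in>Ks m. \<Sum>R\<in>Ks (k - m). if S \<inter> R = {} then sg m (prodA S * Y * prodA R) else 0)"
      using G[where g="\<lambda>S R. sg m (prodA S * Y * prodA R)" and a=m and b="k - m"] mk by simp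
    also have "\<dots> = (\<Sum>S\<in>Ks m. \<Sum>R\<in>Ks (k - m). sg m (prodA S * Y * prodA R))"
    proof (intro sum.cong refl)
      fix S R assume SR: "S \<in> Ks m" "R \<in> Ks (k - m)"
      have S: "finite S" "S \<subseteq> {..<n}" using Ks_sub[OF SR(1)] by blast+
      have R: "finite R" "R \<subseteq> {..<n}" using Ks_sub[OF SR(2)] by blast+
      show "(if S \<inter> R = {} then sg m (prodA S * Y * prodA R) else 0) = sg m (prodA S * Y * prodA R)"
        using prodA_overlap[OF R(1) S(1) S(2) R(2), of Y] by auto
    qed
    also have "\<dots> = sg m (\<Sum>S\<in>Ks m. \<Sum>R\<in>Ks (k - m). prodA S * Y * prodA R)"
      by (simp add: sg_sum)
    also have "(\<Sum>S\<in>Ks m. \<Sum>R\<in>Ks (k - m). prodA S * Y * prodA R) = U m * Y * U (k - m)"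
      unfolding U_def sum_distrib_right sum_distrib_left by (rule sum.swap)
    finally show "(\<Sum>T\<in>Ks k. \<Sum>S\<in>{S. S \<subseteq> T \<and> card S = m}. sg m (prodA S * Y * prodA (T - S))) = sg m (U m * Y * U (k - m))" .
  qed
  finally show ?thesis unfolding Y_def .
qed

end

lemma sum4: "(\<Sum>m\<in>{..4::nat}. f m) = f 0 + f 1 + f 2 + f 3 + (f 4 :: 'a::comm_monoid_add)"
  by (simp add: atMost_Suc numeral_eq_Suc add_ac)
lemma sum3: "(\<Sum>m\<in>{..3::nat}. f m) = f 0 + f 1 + f 2 + (f 3 :: 'a::comm_monoid_add)"
  by (simp add: atMost_Suc numeral_eq_Suc add_ac)
lemma sum2: "(\<Sum>m\<in>{..2::nat}. f m) = f 0 + f 1 + (f 2 :: 'a::comm_monoid_add)"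
  by (simp add: atMost_Suc numeral_eq_Suc add_ac)

lemma ring_final:
  fixes U1 U2 Y1 Y2 :: "'a::ring"
  assumes h1: "U2 * U2 = 0" and h2: "U1 * U2 = 0" and h3: "U2 * U1 = 0" and h4: "U1 * U1 = U2 + U2"
    and h5: "U2 * Y1 * U2 = 0" and h6: "U2 * Y2 * U2 = 0"
    and h7: "U1 * Y1 * U2 = U2 * Y1 * U1" and h8: "U1 * Y2 * U2 = U2 * Y2 * U1"
  shows "(Y1 * U2 - U1 * Y1 * U1 + U2 * Y1) * (Y2 * U2 - U1 * Y2 * U1 + U2 * Y2) = U2 * Y1 * Y2 * U2"
proof -
  have h1': "U2 * (U2 * z) = 0" for z using h1 by (simp add: mult.assoc[symmetric])
  have h2': "U1 * (U2 * z) = 0" for z using h2 by (simp add: mult.assoc[symmetric])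
  have h3': "U2 * (U1 * z) = 0" for z using h3 by (simp add: mult.assoc[symmetric])
  have h4': "U1 * (U1 * z) = U2 * z + U2 * z" for z using h4 by (simp add: mult.assoc[symmetric] distrib_right)
  have h5': "U2 * (Y1 * (U2 * z)) = 0" for z using h5 by (simp add: mult.assoc[symmetric])
  have h6': "U2 * (Y2 * (U2 * z)) = 0" for z using h6 by (simp add: mult.assoc[symmetric])
  have h7': "U1 * (Y1 * (U2 * z)) = U2 * (Y1 * (U1 * z))" for z using h7 by (simp add: mult.assoc[symmetric])
  have h8': "U1 * (Y2 * (U2 * z)) = U2 * (Y2 * (U1 * z))" for z using h8 by (simp add: mult.assoc[symmetric])
  have h5'': "U2 * (Y1 * U2) = 0" using h5 by (simp add: mult.assoc)
  have h6'': "U2 * (Y2 * U2) = 0" using h6 by (simp add: mult.assoc)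
  have h8'': "U1 * (Y2 * U2) = U2 * (Y2 * U1)" using h8 by (simp add: mult.assoc)
  show ?thesis
    by (simp add: algebra_simps h1 h2 h3 h1' h2' h3' h4' h5' h6' h7' h8' h5'' h6'' h8'')
qed

context W begin

lemma U0: "U 0 = 1"
proof -
  have "Ks 0 = {{}}"
  proof
    show "Ks 0 \<subseteq> {{}}"
    proof
      fix S assume S: "S \<in> Ks 0"
      then have "finite S" using Ks_sub by blast
      then show "S \<in> {{}}" using S unfolding Ks_def by simp
    qed
    show "{{}} \<subseteq> Ks 0" unfolding Ks_def by simp
  qed
  then show ?thesis unfolding U_def by simp
qed

lemma main:
  assumes U3: "U 3 = 0" and U4: "U 4 = 0" and y1: "tilde y1" and y2: "tilde y2"
  shows "adop br (app (U 2) y1) * adop br (app (U 2) y2) = U 2 * adop br y1 * adop br y2 * U 2"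
proof -
  have z: "adop br (app 0 y) = 0" for y by (simp add: adop_0)
  have h1: "U 2 * U 2 = 0" using U_mult_count[of 2 2] U4 by simp
  have h2: "U 1 * U 2 = 0" using U_mult_count[of 1 2] U3 by (simp add: numeral_3_eq_3)
  have h3: "U 2 * U 1 = 0" using U_mult_count[of 2 1] U3 by simp
  have h4: "U 1 * U 1 = U 2 + U 2" using U_mult_count[of 1 1] by (simp add: numeral_2_eq_2)
  have E4: "U 2 * adop br y * U 2 = 0" if "tilde y" for y
    using ad_U[OF that, of 4] U3 U4 U0 by (simp add: sum4 sg_def adop_0)
  have E3: "U 1 * adop br y * U 2 = U 2 * adop br y * U 1" if "tilde y" for y
    using ad_U[OF that, of 3] U3 U0 by (simp add: sum3 sg_def adop_0)
  have E2: "adop br (app (U 2) y) = adop br y * U 2 - U 1 * adop br y * U 1 + U 2 * adop br y" if "tilde y" for y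
    using ad_U[OF that, of 2] U0 by (simp add: sum2 sg_def)
  show ?thesis unfolding E2[OF y1] E2[OF y2]
    by (rule ring_final[OF h1 h2 h3 h4 E4[OF y1] E4[OF y2] E3[OF y1] E3[OF y2]])
qed

end

theorem lemma14:
  fixes scale :: "'f::field \<Rightarrow> 'l::ab_group_add \<Rightarrow> 'l"
    and br :: "'l \<Rightarrow> 'l \<Rightarrow> 'l"
    and \<omega> :: "nat \<Rightarrow> nat set \<Rightarrow> 'l"
    and n :: nat
    and y1 y2 :: "nat set \<Rightarrow> 'l"
  assumes lie: "lie_algebra scale br"
    and fam: "\<forall>i<n. tilde (\<omega> i)"
    and comm: "\<forall>i<n. \<forall>j<n. tbr br (\<omega> i) (\<omega> j) = (\<lambda>_. 0)"
    and sub: "\<forall>i<n. \<exists>\<pi>. finite \<pi> \<and> \<pi> \<noteq> {} \<and> in_sub \<pi> (\<omega> i)"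
    and U3: "\<forall>x. tilde x \<longrightarrow> adU br \<omega> n 3 x = (\<lambda>_. 0)"
    and U4: "\<forall>x. tilde x \<longrightarrow> adU br \<omega> n 4 x = (\<lambda>_. 0)"
    and y1: "tilde y1" and y2: "tilde y2"
  shows "\<forall>x. tilde x \<longrightarrow>
           ad br (adU br \<omega> n 2 y2) (ad br (adU br \<omega> n 2 y1) x)
           = adU br \<omega> n 2 (ad br y2 (ad br y1 (adU br \<omega> n 2 x)))"
proof -
  interpret LA br using lie_LA[OF lie] .
  interpret W br \<omega> n
  proof
    show "\<And>i. i < n \<Longrightarrow> tilde (\<omega> i)" using fam by blast
    show "\<And>i j. i < n \<Longrightarrow> j < n \<Longrightarrow> tbr br (\<omega> i) (\<omega> j) = (\<lambda>_. 0)" using comm by blast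
    show "\<And>i. i < n \<Longrightarrow> \<exists>\<pi>. \<pi> \<noteq> {} \<and> Div \<pi> (\<omega> i)" using sub in_sub_Div by blast
  qed
  have u3: "U 3 = 0"
  proof (rule op_eq)
    fix v :: "nat set \<Rightarrow> 'l" assume v: "tilde v"
    show "app (U 3) v = app 0 v" using U3 v adU_eq[OF v, of 3] by (simp add: zero_fun_def)
  qed
  have u4: "U 4 = 0"
  proof (rule op_eq)
    fix v :: "nat set \<Rightarrow> 'l" assume v: "tilde v"
    show "app (U 4) v = app 0 v" using U4 v adU_eq[OF v, of 4] by (simp add: zero_fun_def)
  qed
  have M: "adop br (app (U 2) y1) * adop br (app (U 2) y2) = U 2 * adop br y1 * adop br y2 * U 2"
    by (rule main[OF u3 u4 y1 y2])
  show ?thesis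
  proof (intro allI impI)
    fix x :: "nat set \<Rightarrow> 'l" assume x: "tilde x"
    have t1: "tilde (app (U 2) y1)" "tilde (app (U 2) y2)" using y1 y2 by (simp_all add: app_tilde)
    have "ad br (adU br \<omega> n 2 y2) (ad br (adU br \<omega> n 2 y1) x)
        = app (adop br (app (U 2) y1) * adop br (app (U 2) y2)) x"
      using x t1 by (simp add: adU_eq y1 y2 ad_def app_adop tilde_tbr)
    also have "\<dots> = app (U 2 * adop br y1 * adop br y2 * U 2) x" by (simp only: M)
    also have "\<dots> = adU br \<omega> n 2 (ad br y2 (ad br y1 (adU br \<omega> n 2 x)))"
      using x y1 y2 by (simp add: adU_eq ad_def app_adop tilde_tbr app_tilde)
    finally show "ad br (adU br \<omega> n 2 y2) (ad br (adU br \<omega> n 2 y1) x)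
           = adU br \<omega> n 2 (ad br y2 (ad br y1 (adU br \<omega> n 2 x)))" .
  qed
qed

end
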